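(* Let $\gamma\in F=PSL(2,\mathbb Z)$ be a hyperbolic element (i.e. acting as a hyperbolic isometry of $\mathbb H^2$). Then there exist two sequences $\{U_n^+\}_{n\in\mathbb N}$ and $\{U_n^-\}_{n\in\mathbb N}$ of connected subsets of $B$ such that $\{U_n^+\}$ is a vanishing sequence for the action of $\gamma$ on $B$, $\{U_n^-\}$ is a vanishing sequence for $\gamma^{-1}$, and $U_0^+\cap U_0^-=\emptyset$.
   Context: $B=\mathbb{QP}^1$ is the vertex set of the Farey tessellation of $\mathbb H^2$, with the action of $F=PSL(2,\mathbb Z)$, and $T$ is the dual trivalent tree. A quadribone is the set of four vertices of two adjacent ideal triangles (corresponding to an edge of $T$); $A\subset B$ is connected if it is a union of quadribones whose corresponding edges form a connected subset of $T$. For a map $\gamma:X\to X$ of a topological space (here $X=B$ with the discrete topology), a sequence of non-empty subsets $\{V_n\}$ is a vanishing sequence for $\gamma$ if $V_{n+1}\subset V_n$, $\bigcap_n V_n=\emptyset$, and for every compact $K\subset X$ and every $n$ there exists $p\in\mathbb N$ with $\gamma^p(K)\subset V_n$. *)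

theory Defs
  imports Main
begin

text \<open>Points of QP^1 are represented by primitive integer vectors (p,q), normalized so that
  q > 0, or (p,q) = (1,0) (the point at infinity). (p,q) stands for p/q.\<close>

definition qp1 :: "(int \<times> int) set" where
  "qp1 = {(p,q). coprime p q \<and> (q > 0 \<or> (q = 0 \<and> p = 1))}"

definition normalize_pt :: "int \<times> int \<Rightarrow> int \<times> int" where
  "normalize_pt v = (case v of (p,q) \<Rightarrow>
     (if q < 0 \<or> (q = 0 \<and> p < 0) then (-p, -q) else (p, q)))"

text \<open>Action of the element of PSL(2,Z) represented by the matrix [[a,b],[c,d]]
  (with ad - bc = 1) by Moebius transformations z \<mapsto> (az+b)/(cz+d).\<close>

definition mob :: "int \<Rightarrow> int \<Rightarrow> int \<Rightarrow> int \<Rightarrow> int \<times> int \<Rightarrow> int \<times> int" where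
  "mob a b c d v = (case v of (p,q) \<Rightarrow> normalize_pt (a*p + b*q, c*p + d*q))"

definition farey_adj :: "int \<times> int \<Rightarrow> int \<times> int \<Rightarrow> bool" where
  "farey_adj x y = (x \<in> qp1 \<and> y \<in> qp1 \<and> \<bar>fst x * snd y - snd x * fst y\<bar> = 1)"

definition farey_edge :: "(int \<times> int) set \<Rightarrow> bool" where
  "farey_edge e = (\<exists>x y. e = {x, y} \<and> farey_adj x y)"

definition farey_triangle :: "(int \<times> int) set \<Rightarrow> bool" where
  "farey_triangle t = (\<exists>x y z. t = {x, y, z} \<and> farey_adj x y \<and> farey_adj y z \<and> farey_adj x z)"

text \<open>Edges of the dual tree T correspond to Farey edges; the quadribone of a Farey edge is
  the set of vertices of the two ideal triangles adjacent along it.\<close>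

definition quadribone :: "(int \<times> int) set \<Rightarrow> (int \<times> int) set" where
  "quadribone e = \<Union>{t. farey_triangle t \<and> e \<subseteq> t}"

text \<open>Two edges of T meet (share a vertex of T) iff the corresponding Farey edges are
  sides of a common ideal triangle.\<close>

definition T_adjacent :: "(int \<times> int) set \<Rightarrow> (int \<times> int) set \<Rightarrow> bool" where
  "T_adjacent e f = (\<exists>t. farey_triangle t \<and> e \<subseteq> t \<and> f \<subseteq> t)"

definition T_connected :: "(int \<times> int) set set \<Rightarrow> bool" where
  "T_connected S = ((\<forall>e\<in>S. farey_edge e) \<and>
     (\<forall>e\<in>S. \<forall>f\<in>S. (e, f) \<in> {(e', f'). e' \<in> S \<and> f' \<in> S \<and> T_adjacent e' f'}\<^sup>*))"

definition connected_B :: "(int \<times> int) set \<Rightarrow> bool" where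
  "connected_B A = (\<exists>S. T_connected S \<and> A = \<Union>(quadribone ` S))"

text \<open>Vanishing sequence for a map g on B (discrete topology: compact = finite).\<close>

definition vanishing_seq :: "(int \<times> int \<Rightarrow> int \<times> int) \<Rightarrow> (nat \<Rightarrow> (int \<times> int) set) \<Rightarrow> bool" where
  "vanishing_seq g V =
    ((\<forall>n. V n \<subseteq> qp1 \<and> V n \<noteq> {}) \<and>
     (\<forall>n. V (Suc n) \<subseteq> V n) \<and>
     (\<Inter>n. V n) = {} \<and>
     (\<forall>K. K \<subseteq> qp1 \<and> finite K \<longrightarrow> (\<forall>n. \<exists>p::nat. (g ^^ p) ` K \<subseteq> V n)))"

end

theory Submission
  imports Defs
begin


definition ap :: "int \<Rightarrow> int \<Rightarrow> int \<Rightarrow> int \<Rightarrow> int \<times> int \<Rightarrow> int \<times> int" where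
  "ap a b c d v = (a * fst v + b * snd v, c * fst v + d * snd v)"

lemma mob_ap: "mob a b c d v = normalize_pt (ap a b c d v)"
  by (cases v) (simp add: mob_def ap_def)

lemma norm_cases: "normalize_pt v = v \<or> normalize_pt v = (- fst v, - snd v)"
  by (cases v) (auto simp: normalize_pt_def)

lemma norm_neg: "normalize_pt (- fst v, - snd v) = normalize_pt v"
  by (cases v) (auto simp: normalize_pt_def)

lemma norm_snd: "snd (normalize_pt v) \<ge> 0"
  by (cases v) (auto simp: normalize_pt_def)

lemma norm_snd0: "snd (normalize_pt v) = 0 \<Longrightarrow> fst (normalize_pt v) \<ge> 0"
  by (cases v) (auto simp: normalize_pt_def split: if_splits)

lemma norm_qp1: "v \<in> qp1 \<Longrightarrow> normalize_pt v = v"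
  by (cases v) (auto simp: normalize_pt_def qp1_def)

lemma mob_norm: "mob a b c d (normalize_pt w) = mob a b c d w"
proof -
  have "ap a b c d (- fst w, - snd w) = (- fst (ap a b c d w), - snd (ap a b c d w))"
    by (simp add: ap_def)
  then show ?thesis using norm_cases[of w] norm_neg[of "ap a b c d w"]
    by (auto simp: mob_ap)
qed

lemma mob_comp: "mob a b c d (mob e f g h v) = mob (a*e+b*g) (a*f+b*h) (c*e+d*g) (c*f+d*h) v"
proof -
  have "mob a b c d (mob e f g h v) = mob a b c d (ap e f g h v)"
    by (simp add: mob_ap[of e] mob_norm)
  also have "\<dots> = mob (a*e+b*g) (a*f+b*h) (c*e+d*g) (c*f+d*h) v"
    by (simp add: mob_ap ap_def algebra_simps)
  finally show ?thesis .
qed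

lemma mob_neg: "mob (-a) (-b) (-c) (-d) = mob a b c d"
proof
  fix v
  have "ap (-a) (-b) (-c) (-d) v = (- fst (ap a b c d v), - snd (ap a b c d v))"
    by (simp add: ap_def)
  then show "mob (-a) (-b) (-c) (-d) v = mob a b c d v"
    by (simp add: mob_ap norm_neg)
qed

definition dt :: "int \<times> int \<Rightarrow> int \<times> int \<Rightarrow> int" where
  "dt x y = fst x * snd y - snd x * fst y"

lemma dt_norm1: "\<bar>dt (normalize_pt x) y\<bar> = \<bar>dt x y\<bar>"
  using norm_cases[of x] by (auto simp: dt_def algebra_simps)

lemma dt_norm2: "\<bar>dt x (normalize_pt y)\<bar> = \<bar>dt x y\<bar>"
  using norm_cases[of y] by (auto simp: dt_def algebra_simps)

lemma dt_ap: "dt (ap a b c d x) (ap a b c d y) = (a*d-b*c) * dt x y"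
  by (simp add: dt_def ap_def algebra_simps)

lemma dt_mob: "\<bar>a*d-b*c\<bar> = 1 \<Longrightarrow> \<bar>dt (mob a b c d x) (mob a b c d y)\<bar> = \<bar>dt x y\<bar>"
  by (simp add: mob_ap dt_norm1 dt_norm2 dt_ap abs_mult)

lemma coprime_from_dt:
  assumes "\<bar>dt x y\<bar> = 1" shows "coprime (fst y) (snd y)"
proof (rule coprimeI)
  fix c assume "c dvd fst y" "c dvd snd y"
  then have "c dvd dt x y" by (simp add: dt_def)
  then have "c dvd \<bar>dt x y\<bar>" by simp
  then show "is_unit c" using assms by simp
qed

lemma qp1_nz: "x \<in> qp1 \<Longrightarrow> x \<noteq> (0,0)"
  by (auto simp: qp1_def)

lemma farey_adj_dt: "farey_adj x y = (x \<in> qp1 \<and> y \<in> qp1 \<and> \<bar>dt x y\<bar> = 1)"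
  by (simp add: farey_adj_def dt_def)

lemma norm_in_qp1:
  assumes "coprime (fst v) (snd v)" shows "normalize_pt v \<in> qp1"
proof -
  let ?w = "normalize_pt v"
  have cw: "coprime (fst ?w) (snd ?w)" using norm_cases[of v] assms by auto
  have "snd ?w \<ge> 0" by (rule norm_snd)
  moreover have "snd ?w = 0 \<Longrightarrow> fst ?w = 1"
  proof -
    assume h: "snd ?w = 0"
    then have "fst ?w \<ge> 0" by (rule norm_snd0)
    moreover have "is_unit (fst ?w)" using cw h by simp
    ultimately show "fst ?w = 1" by simp
  qed
  ultimately show ?thesis using cw by (cases ?w) (auto simp: qp1_def)
qed

lemma dvd_unit_mul: "\<bar>D\<bar> = (1::int) \<Longrightarrow> k dvd D * y \<Longrightarrow> k dvd y"
proof -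
  assume "\<bar>D\<bar> = 1" "k dvd D * y"
  then have "D * D = 1" by (metis abs_mult_self_eq mult_1)
  moreover have "k dvd D * y * D" using \<open>k dvd D * y\<close> by simp
  ultimately have "D * y * D = y" by (simp add: algebra_simps)
  with \<open>k dvd D * y * D\<close> show ?thesis by simp
qed

lemma mob_qp1:
  assumes "\<bar>a*d-b*c\<bar> = 1" "x \<in> qp1" shows "mob a b c d x \<in> qp1"
proof -
  have "coprime (fst (ap a b c d x)) (snd (ap a b c d x))"
  proof (rule coprimeI)
    fix k assume k: "k dvd fst (ap a b c d x)" "k dvd snd (ap a b c d x)"
    have "k dvd d * fst (ap a b c d x) - b * snd (ap a b c d x)" using k by simp
    moreover have "d * fst (ap a b c d x) - b * snd (ap a b c d x) = (a*d-b*c) * fst x"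
      by (simp add: ap_def algebra_simps)
    ultimately have k1: "k dvd fst x" using dvd_unit_mul[OF assms(1)] by metis
    have "k dvd a * snd (ap a b c d x) - c * fst (ap a b c d x)" using k by simp
    moreover have "a * snd (ap a b c d x) - c * fst (ap a b c d x) = (a*d-b*c) * snd x"
      by (simp add: ap_def algebra_simps)
    ultimately have k2: "k dvd snd x" using dvd_unit_mul[OF assms(1)] by metis
    have "coprime (fst x) (snd x)" using assms(2) by (auto simp: qp1_def)
    then show "is_unit k" using k1 k2 by (meson coprime_common_divisor)
  qed
  then show ?thesis by (simp add: mob_ap norm_in_qp1)
qed

lemma mob_inv:
  assumes "\<bar>a*d-b*c\<bar> = 1" "x \<in> qp1" shows "mob d (-b) (-c) a (mob a b c d x) = x"
proof -
  have "mob d (-b) (-c) a (mob a b c d x) = mob (a*d-b*c) 0 0 (a*d-b*c) x"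
    by (simp add: mob_comp algebra_simps)
  also have "\<dots> = x"
  proof (cases "a*d-b*c = 1")
    case True
    then show ?thesis using assms(2) by (simp add: mob_ap ap_def norm_qp1)
  next
    case False
    then have "a*d-b*c = -1" using assms(1) by linarith
    then show ?thesis using assms(2) norm_neg[of x] by (simp add: mob_ap ap_def norm_qp1)
  qed
  finally show ?thesis .
qed


definition aut :: "(int \<times> int \<Rightarrow> int \<times> int) \<Rightarrow> (int \<times> int \<Rightarrow> int \<times> int) \<Rightarrow> bool" where
  "aut \<phi> \<psi> = ((\<forall>x\<in>qp1. \<phi> x \<in> qp1 \<and> \<psi> x \<in> qp1 \<and> \<psi> (\<phi> x) = x \<and> \<phi> (\<psi> x) = x) \<and>
     (\<forall>x\<in>qp1. \<forall>y\<in>qp1. farey_adj (\<phi> x) (\<phi> y) = farey_adj x y))"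

lemma aut_sym: "aut \<phi> \<psi> \<Longrightarrow> aut \<psi> \<phi>"
  unfolding aut_def by metis

lemma aut_comp: "aut \<phi>1 \<psi>1 \<Longrightarrow> aut \<phi>2 \<psi>2 \<Longrightarrow> aut (\<phi>1 \<circ> \<phi>2) (\<psi>2 \<circ> \<psi>1)"
  unfolding aut_def by simp

lemma aut_id: "aut id id"
  unfolding aut_def by simp

lemma aut_pow: "aut \<phi> \<psi> \<Longrightarrow> aut (\<phi> ^^ n) (\<psi> ^^ n)"
proof (induction n)
  case 0 then show ?case by (simp add: aut_def)
next
  case (Suc n)
  have "aut (\<phi> \<circ> \<phi>^^n) (\<psi>^^n \<circ> \<psi>)" using aut_comp[OF Suc.prems Suc.IH[OF Suc.prems]] .
  moreover have "\<psi>^^n \<circ> \<psi> = \<psi>^^Suc n" by (metis funpow_Suc_right)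
  ultimately show ?case by (simp add: comp_def)
qed

lemma aut_mob: "\<bar>a*d-b*c\<bar> = 1 \<Longrightarrow> aut (mob a b c d) (mob d (-b) (-c) a)"
proof -
  assume h: "\<bar>a*d-b*c\<bar> = 1"
  have h': "\<bar>d*a-(-b)*(-c)\<bar> = 1" using h by (simp add: algebra_simps)
  have inv2: "mob a b c d (mob d (-b) (-c) a x) = x" if "x \<in> qp1" for x
    using mob_inv[OF h' that] by simp
  show ?thesis unfolding aut_def
    using mob_qp1[OF h] mob_qp1[OF h'] mob_inv[OF h] inv2 dt_mob[OF h]
    by (auto simp: farey_adj_dt)
qed

lemma adj_qp1: "farey_adj x y \<Longrightarrow> x \<in> qp1 \<and> y \<in> qp1"
  by (simp add: farey_adj_def)

lemma adj_sym: "farey_adj x y \<Longrightarrow> farey_adj y x"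
  by (auto simp: farey_adj_def algebra_simps abs_minus_commute)

lemma tri_qp1: "farey_triangle t \<Longrightarrow> t \<subseteq> qp1"
  unfolding farey_triangle_def using adj_qp1 by blast

lemma aut_tri: "aut \<phi> \<psi> \<Longrightarrow> farey_triangle t \<Longrightarrow> farey_triangle (\<phi> ` t)"
proof -
  assume a: "aut \<phi> \<psi>" and t: "farey_triangle t"
  then obtain x y z where e: "t = {x,y,z}" "farey_adj x y" "farey_adj y z" "farey_adj x z"
    unfolding farey_triangle_def by blast
  then have "x \<in> qp1" "y \<in> qp1" "z \<in> qp1" using adj_qp1 by auto
  then show ?thesis using a e unfolding aut_def farey_triangle_def
    by (rule_tac x="\<phi> x" in exI, rule_tac x="\<phi> y" in exI, rule_tac x="\<phi> z" in exI) auto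
qed

lemma aut_edge: "aut \<phi> \<psi> \<Longrightarrow> farey_edge e \<Longrightarrow> farey_edge (\<phi> ` e)"
proof -
  assume a: "aut \<phi> \<psi>" and t: "farey_edge e"
  then obtain x y where e: "e = {x,y}" "farey_adj x y"
    unfolding farey_edge_def by blast
  then have "x \<in> qp1" "y \<in> qp1" using adj_qp1 by auto
  then show ?thesis using a e unfolding aut_def farey_edge_def
    by (rule_tac x="\<phi> x" in exI, rule_tac x="\<phi> y" in exI) auto
qed

lemma edge_qp1: "farey_edge e \<Longrightarrow> e \<subseteq> qp1"
  unfolding farey_edge_def using adj_qp1 by blast

lemma aut_img_img: "aut \<phi> \<psi> \<Longrightarrow> A \<subseteq> qp1 \<Longrightarrow> \<psi> ` \<phi> ` A = A"
  unfolding aut_def by (auto simp: image_iff) (metis subsetD)+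

lemma aut_quad: "aut \<phi> \<psi> \<Longrightarrow> farey_edge e \<Longrightarrow> quadribone (\<phi> ` e) = \<phi> ` quadribone e"
proof -
  assume a: "aut \<phi> \<psi>" and e: "farey_edge e"
  have a': "aut \<psi> \<phi>" using aut_sym[OF a] .
  show ?thesis
  proof
    show "\<phi> ` quadribone e \<subseteq> quadribone (\<phi> ` e)"
      unfolding quadribone_def using aut_tri[OF a] by blast
  next
    show "quadribone (\<phi> ` e) \<subseteq> \<phi> ` quadribone e"
    proof
      fix w assume "w \<in> quadribone (\<phi> ` e)"
      then obtain t where t: "farey_triangle t" "\<phi> ` e \<subseteq> t" "w \<in> t"
        unfolding quadribone_def by blast
      have t2: "farey_triangle (\<psi> ` t)" using aut_tri[OF a' t(1)] .
      have "\<psi> ` \<phi> ` e = e" using aut_img_img[OF a edge_qp1[OF e]] .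
      then have "e \<subseteq> \<psi> ` t" using t(2) by (metis image_mono)
      then have "\<psi> w \<in> quadribone e" unfolding quadribone_def using t2 t(3) by blast
      moreover have "\<phi> (\<psi> w) = w" using a tri_qp1[OF t(1)] t(3) unfolding aut_def by blast
      ultimately show "w \<in> \<phi> ` quadribone e" by (metis imageI)
    qed
  qed
qed

lemma aut_Tadj: "aut \<phi> \<psi> \<Longrightarrow> T_adjacent e f \<Longrightarrow> T_adjacent (\<phi> ` e) (\<phi> ` f)"
  unfolding T_adjacent_def using aut_tri by blast

lemma rtrancl_map_aux:
  assumes "\<And>x y. (x,y) \<in> r \<Longrightarrow> (h x, h y) \<in> s" "(x,y) \<in> r\<^sup>*"
  shows "(h x, h y) \<in> s\<^sup>*"
  using assms(2)
proof (induction rule: rtrancl_induct)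
  case base then show ?case by simp
next
  case (step y z) then show ?case using assms(1) by (meson rtrancl.rtrancl_into_rtrancl)
qed

lemma aut_connected:
  assumes a: "aut \<phi> \<psi>" and c: "connected_B A" shows "connected_B (\<phi> ` A)"
proof -
  obtain S where S: "T_connected S" "A = \<Union>(quadribone ` S)" using c connected_B_def by blast
  let ?S = "(\<lambda>e. \<phi> ` e) ` S"
  have ed: "\<forall>e\<in>S. farey_edge e" using S(1) T_connected_def by blast
  have "T_connected ?S"
    unfolding T_connected_def
  proof (intro conjI ballI)
    fix e assume "e \<in> ?S" then show "farey_edge e" using ed aut_edge[OF a] by blast
  next
    fix e f assume "e \<in> ?S" "f \<in> ?S"
    then obtain e0 f0 where ef: "e0 \<in> S" "f0 \<in> S" "e = \<phi> ` e0" "f = \<phi> ` f0" by blast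
    have "(e0,f0) \<in> {(e', f'). e' \<in> S \<and> f' \<in> S \<and> T_adjacent e' f'}\<^sup>*"
      using S(1) ef unfolding T_connected_def by blast
    then have "((\<lambda>e. \<phi> ` e) e0, (\<lambda>e. \<phi> ` e) f0) \<in> {(e', f'). e' \<in> ?S \<and> f' \<in> ?S \<and> T_adjacent e' f'}\<^sup>*"
      by (rule rtrancl_map_aux[rotated]) (auto intro: aut_Tadj[OF a])
    then show "(e, f) \<in> {(e', f'). e' \<in> ?S \<and> f' \<in> ?S \<and> T_adjacent e' f'}\<^sup>*" using ef by simp
  qed
  moreover have "\<phi> ` A = \<Union>(quadribone ` ?S)"
    using S(2) ed aut_quad[OF a] by (auto simp: image_Union)
  ultimately show ?thesis unfolding connected_B_def by blast
qed


lemma aut_pow_qp1: "aut g gi \<Longrightarrow> x \<in> qp1 \<Longrightarrow> (g^^n) x \<in> qp1"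
  using aut_pow[of g gi n] unfolding aut_def by blast

lemma aut_pow_inv: "aut g gi \<Longrightarrow> x \<in> qp1 \<Longrightarrow> (gi^^n) ((g^^n) x) = x"
  using aut_pow[of g gi n] unfolding aut_def by blast

lemma pow_inv_set: "g ` A \<subseteq> A \<Longrightarrow> x \<in> A \<Longrightarrow> (g^^n) x \<in> A"
  by (induction n) auto

lemma eventually_in:
  assumes "g ` A \<subseteq> A" "\<forall>x\<in>qp1. \<exists>p. (g^^p) x \<in> A" "finite K" "K \<subseteq> qp1"
  shows "\<exists>P. \<forall>x\<in>K. (g^^P) x \<in> A"
  using assms(3,4)
proof (induction K rule: finite_induct)
  case empty then show ?case by simp
next
  case (insert x K)
  then obtain P where P: "\<forall>y\<in>K. (g^^P) y \<in> A" by auto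
  obtain p where p: "(g^^p) x \<in> A" using assms(2) insert.prems by auto
  have "\<forall>y\<in>insert x K. (g^^(p+P)) y \<in> A"
  proof
    fix y assume "y \<in> insert x K"
    then show "(g^^(p+P)) y \<in> A"
    proof
      assume "y = x"
      then have "(g^^(P+p)) y = (g^^P) ((g^^p) x)" by (simp add: funpow_add)
      then show ?thesis using pow_inv_set[OF assms(1) p] by (simp add: add.commute)
    next
      assume "y \<in> K"
      then have "(g^^(p+P)) y = (g^^p) ((g^^P) y)" by (simp add: funpow_add)
      then show ?thesis using pow_inv_set[OF assms(1)] P \<open>y \<in> K\<close> by simp
    qed
  qed
  then show ?case by blast
qed

lemma vanish:
  assumes a: "aut g gi" and A: "A \<subseteq> qp1" "A \<noteq> {}" "g ` A \<subseteq> A"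
    and B: "gi ` B \<subseteq> B" and AB: "A \<inter> B = {}"
    and rA: "\<forall>x\<in>qp1. \<exists>p. (g^^p) x \<in> A" and rB: "\<forall>x\<in>qp1. \<exists>p. (gi^^p) x \<in> B"
  shows "vanishing_seq g (\<lambda>n. (g^^n) ` A)"
  unfolding vanishing_seq_def
proof (intro conjI allI impI)
  fix n
  show "(g^^n) ` A \<subseteq> qp1" using aut_pow_qp1[OF a] A(1) by blast
  show "(g^^n) ` A \<noteq> {}" using A(2) by simp
  have "g^^Suc n = g^^n \<circ> g" by (metis funpow_Suc_right)
  then have "(g^^Suc n) ` A = (g^^n) ` (g ` A)" by (simp add: image_comp)
  then show "(g^^Suc n) ` A \<subseteq> (g^^n) ` A" using A(3) by (metis image_mono)
next
  show "(\<Inter>n. (g^^n) ` A) = {}"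
  proof (rule ccontr)
    assume "(\<Inter>n. (g^^n) ` A) \<noteq> {}"
    then obtain x where x: "\<And>n. x \<in> (g^^n) ` A" by blast
    have "x \<in> qp1" using x[of 0] A(1) by auto
    then obtain p where p: "(gi^^p) x \<in> B" using rB by blast
    obtain y where y: "y \<in> A" "x = (g^^p) y" using x[of p] by blast
    have "(gi^^p) x = y" using y aut_pow_inv[OF a] A(1) by blast
    then show False using p y(1) AB by blast
  qed
next
  fix K n assume K: "K \<subseteq> qp1 \<and> finite K"
  then obtain P where P: "\<forall>x\<in>K. (g^^P) x \<in> A" using eventually_in[OF A(3) rA] by blast
  have "(g^^(n+P)) ` K \<subseteq> (g^^n) ` A"
  proof
    fix z assume "z \<in> (g^^(n+P)) ` K"
    then obtain x where "x \<in> K" "z = (g^^(n+P)) x" by blast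
    then show "z \<in> (g^^n) ` A" using P by (simp add: funpow_add)
  qed
  then show "\<exists>p. (g^^p) ` K \<subseteq> (g^^n) ` A" by blast
qed

definition good :: "(int \<times> int \<Rightarrow> int \<times> int) \<Rightarrow> (int \<times> int \<Rightarrow> int \<times> int) \<Rightarrow>
   (int \<times> int) set \<Rightarrow> (int \<times> int) set \<Rightarrow> bool" where
  "good g gi A B = (aut g gi \<and> A \<subseteq> qp1 \<and> A \<noteq> {} \<and> B \<subseteq> qp1 \<and> B \<noteq> {} \<and>
     g ` A \<subseteq> A \<and> gi ` B \<subseteq> B \<and> A \<inter> B = {} \<and>
     (\<forall>x\<in>qp1. \<exists>p. (g^^p) x \<in> A) \<and> (\<forall>x\<in>qp1. \<exists>p. (gi^^p) x \<in> B) \<and>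
     connected_B A \<and> connected_B B)"

lemma good_final:
  assumes "good g gi A B"
  shows "\<exists>Up Um :: nat \<Rightarrow> (int \<times> int) set.
           (\<forall>n. connected_B (Up n)) \<and> (\<forall>n. connected_B (Um n)) \<and>
           vanishing_seq g Up \<and> vanishing_seq gi Um \<and> Up 0 \<inter> Um 0 = {}"
proof (intro exI conjI)
  have a: "aut g gi" and a': "aut gi g" using assms aut_sym unfolding good_def by auto
  show "\<forall>n. connected_B ((\<lambda>n. (g^^n) ` A) n)"
    using assms aut_connected[OF aut_pow[OF a]] unfolding good_def by blast
  show "\<forall>n. connected_B ((\<lambda>n. (gi^^n) ` B) n)"
    using assms aut_connected[OF aut_pow[OF a']] unfolding good_def by blast
  show "vanishing_seq g (\<lambda>n. (g^^n) ` A)"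
    using assms unfolding good_def by (intro vanish[of g gi A B]) auto
  show "vanishing_seq gi (\<lambda>n. (gi^^n) ` B)"
    using assms a' unfolding good_def by (intro vanish[of gi g B A]) auto
  show "(\<lambda>n. (g^^n) ` A) 0 \<inter> (\<lambda>n. (gi^^n) ` B) 0 = {}"
    using assms unfolding good_def by simp
qed

lemma pow_conj: "(\<And>y. g (h y) = h (g' y)) \<Longrightarrow> (g^^n) (h y) = h ((g'^^n) y)"
  by (induction n) auto

lemma good_transport:
  assumes gd: "good g' gi' A B" and a: "aut g gi" and ah: "aut h hi"
    and c1: "\<And>y. g (h y) = h (g' y)" and c2: "\<And>y. gi (h y) = h (gi' y)"
  shows "good g gi (h ` A) (h ` B)"
proof -
  have A: "A \<subseteq> qp1" "A \<noteq> {}" "g' ` A \<subseteq> A" "connected_B A" using gd unfolding good_def by auto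
  have B: "B \<subseteq> qp1" "B \<noteq> {}" "gi' ` B \<subseteq> B" "connected_B B" using gd unfolding good_def by auto
  have AB: "A \<inter> B = {}" using gd unfolding good_def by auto
  have rA: "\<forall>x\<in>qp1. \<exists>p. (g'^^p) x \<in> A" and rB: "\<forall>x\<in>qp1. \<exists>p. (gi'^^p) x \<in> B"
    using gd unfolding good_def by auto
  have hq: "\<And>x. x \<in> qp1 \<Longrightarrow> h x \<in> qp1 \<and> hi x \<in> qp1 \<and> hi (h x) = x \<and> h (hi x) = x"
    using ah unfolding aut_def by blast
  show ?thesis unfolding good_def
  proof (intro conjI)
    show "aut g gi" by (rule a)
    show "h ` A \<subseteq> qp1" "h ` A \<noteq> {}" "h ` B \<subseteq> qp1" "h ` B \<noteq> {}" using A B hq by auto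
    show "g ` h ` A \<subseteq> h ` A" using A(3) c1 by auto
    show "gi ` h ` B \<subseteq> h ` B" using B(3) c2 by auto
    show "h ` A \<inter> h ` B = {}"
    proof (rule ccontr)
      assume "h ` A \<inter> h ` B \<noteq> {}"
      then obtain x y where "x \<in> A" "y \<in> B" "h x = h y" by blast
      then have "hi (h x) = hi (h y)" by simp
      moreover have "hi (h x) = x" "hi (h y) = y" using hq \<open>x \<in> A\<close> \<open>y \<in> B\<close> A(1) B(1) by blast+
      ultimately have "x = y" by simp
      then show False using AB \<open>x \<in> A\<close> \<open>y \<in> B\<close> by blast
    qed
    show "\<forall>x\<in>qp1. \<exists>p. (g^^p) x \<in> h ` A"
    proof
      fix x assume x: "x \<in> qp1"
      then obtain p where "(g'^^p) (hi x) \<in> A" using rA hq by blast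
      moreover have "(g^^p) (h (hi x)) = h ((g'^^p) (hi x))" using pow_conj[of g h g'] c1 by blast
      ultimately show "\<exists>p. (g^^p) x \<in> h ` A" using hq[OF x] by (metis imageI)
    qed
    show "\<forall>x\<in>qp1. \<exists>p. (gi^^p) x \<in> h ` B"
    proof
      fix x assume x: "x \<in> qp1"
      then obtain p where "(gi'^^p) (hi x) \<in> B" using rB hq by blast
      moreover have "(gi^^p) (h (hi x)) = h ((gi'^^p) (hi x))" using pow_conj[of gi h gi'] c2 by blast
      ultimately show "\<exists>p. (gi^^p) x \<in> h ` B" using hq[OF x] by (metis imageI)
    qed
    show "connected_B (h ` A)" "connected_B (h ` B)" using aut_connected[OF ah] A(4) B(4) by auto
  qed
qed


definition pr :: "int \<times> int \<Rightarrow> int" where "pr x = fst x * snd x"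
definition l1 :: "int \<times> int \<Rightarrow> int" where "l1 x = \<bar>fst x\<bar> + \<bar>snd x\<bar>"
definition Qp :: "(int \<times> int) set" where "Qp = {x\<in>qp1. 0 \<le> pr x}"
definition Qm :: "(int \<times> int) set" where "Qm = {x\<in>qp1. pr x \<le> 0}"

lemma pr_norm: "pr (normalize_pt v) = pr v"
  using norm_cases[of v] by (auto simp: pr_def)

lemma l1_norm: "l1 (normalize_pt v) = l1 v"
  using norm_cases[of v] by (auto simp: l1_def)

lemma qp1_snd: "x \<in> qp1 \<Longrightarrow> snd x \<ge> 0 \<and> (snd x = 0 \<longrightarrow> fst x = 1)"
  by (auto simp: qp1_def)

lemma Qp_nonneg: "x \<in> Qp \<Longrightarrow> fst x \<ge> 0 \<and> snd x \<ge> 0"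
proof -
  assume x: "x \<in> Qp"
  then have s: "snd x \<ge> 0 \<and> (snd x = 0 \<longrightarrow> fst x = 1)" "0 \<le> fst x * snd x"
    using qp1_snd by (auto simp: Qp_def pr_def)
  show ?thesis
  proof (cases "snd x = 0")
    case True then show ?thesis using s by simp
  next
    case False then have "snd x > 0" using s by simp
    then show ?thesis using s(2) by (simp add: zero_le_mult_iff)
  qed
qed

lemma Qm_cases: "x \<in> Qm \<Longrightarrow> (fst x \<le> 0 \<and> snd x > 0) \<or> x = (1,0)"
proof -
  assume x: "x \<in> Qm"
  then have s: "snd x \<ge> 0 \<and> (snd x = 0 \<longrightarrow> fst x = 1)" "fst x * snd x \<le> 0"
    using qp1_snd by (auto simp: Qm_def pr_def)
  show ?thesis
  proof (cases "snd x = 0")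
    case True then show ?thesis using s by (cases x) simp
  next
    case False then have "snd x > 0" using s by simp
    then show ?thesis using s(2) by (simp add: mult_le_0_iff)
  qed
qed

lemma mul_ge: "(1::int) \<le> a \<Longrightarrow> 0 \<le> u \<Longrightarrow> u \<le> a * u"
  using mult_right_mono[of 1 a u] by simp

lemma mul_le: "(1::int) \<le> a \<Longrightarrow> u \<le> 0 \<Longrightarrow> a * u \<le> u"
  using mult_right_mono_neg[of 1 a u] by simp

lemma abs_opp: "(1::int) \<le> a \<Longrightarrow> 1 \<le> b \<Longrightarrow> u * v < 0 \<Longrightarrow> \<bar>u\<bar> + \<bar>v\<bar> \<le> \<bar>a*u - b*v\<bar>"
proof -
  assume h: "1 \<le> a" "1 \<le> b" "u * v < 0"
  then have "(u > 0 \<and> v < 0) \<or> (u < 0 \<and> v > 0)" by (auto simp: mult_less_0_iff)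
  then show ?thesis
  proof
    assume uv: "u > 0 \<and> v < 0"
    have "u \<le> a*u" using mul_ge[of a u] h uv by simp
    moreover have "b*v \<le> v" using mul_le[of b v] h uv by simp
    ultimately show ?thesis using uv abs_ge_self[of "a*u - b*v"] by linarith
  next
    assume uv: "u < 0 \<and> v > 0"
    have "a*u \<le> u" using mul_le[of a u] h uv by simp
    moreover have "v \<le> b*v" using mul_ge[of b v] h uv by simp
    ultimately show ?thesis using uv abs_ge_minus_self[of "a*u - b*v"] by linarith
  qed
qed

lemma abs_same: "(1::int) \<le> a \<Longrightarrow> 1 \<le> b \<Longrightarrow> u * v > 0 \<Longrightarrow> \<bar>u\<bar> + \<bar>v\<bar> \<le> \<bar>a*u + b*v\<bar>"
proof -
  assume h: "1 \<le> a" "1 \<le> b" "u * v > 0"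
  then have "(u > 0 \<and> v > 0) \<or> (u < 0 \<and> v < 0)" by (auto simp: zero_less_mult_iff)
  then show ?thesis
  proof
    assume uv: "u > 0 \<and> v > 0"
    have "u \<le> a*u" using mul_ge[of a u] h uv by simp
    moreover have "v \<le> b*v" using mul_ge[of b v] h uv by simp
    ultimately show ?thesis using uv abs_ge_self[of "a*u + b*v"] by linarith
  next
    assume uv: "u < 0 \<and> v < 0"
    have "a*u \<le> u" using mul_le[of a u] h uv by simp
    moreover have "b*v \<le> v" using mul_le[of b v] h uv by simp
    ultimately show ?thesis using uv abs_ge_minus_self[of "a*u + b*v"] by linarith
  qed
qed

lemma reach_gen:
  assumes cl: "\<And>x. x \<in> qp1 \<Longrightarrow> g x \<in> qp1"
    and st: "\<And>x. x \<in> qp1 \<Longrightarrow> x \<notin> A \<Longrightarrow> g x \<notin> A \<Longrightarrow> l1 (g x) < l1 x"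
  shows "x \<in> qp1 \<Longrightarrow> \<exists>p. (g^^p) x \<in> A"
proof (induction "nat (l1 x)" arbitrary: x rule: less_induct)
  case less
  show ?case
  proof (cases "x \<in> A")
    case True then show ?thesis by (metis funpow_0)
  next
    case False
    show ?thesis
    proof (cases "g x \<in> A")
      case True then have "(g^^1) x \<in> A" by simp
      then show ?thesis by blast
    next
      case False2: False
      have "l1 (g x) < l1 x" using st less.prems False False2 by blast
      moreover have "l1 (g x) \<ge> 0" by (simp add: l1_def)
      ultimately have "nat (l1 (g x)) < nat (l1 x)" by simp
      then obtain p where "(g^^p) (g x) \<in> A" using less.hyps cl less.prems by blast
      then have "(g^^Suc p) x \<in> A" by (metis comp_apply funpow_Suc_right)
      then show ?thesis by blast
    qed
  qed
qed

context
  fixes a b c d :: int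
  assumes pos: "1 \<le> a" "1 \<le> b" "1 \<le> c" "1 \<le> d" and det: "a*d - b*c = 1"
begin

lemma det1: "\<bar>a*d-b*c\<bar> = 1" using det by simp
lemma det2: "\<bar>d*a-(-b)*(-c)\<bar> = 1" using det by (simp add: algebra_simps)

lemma g_Qp: "mob a b c d ` Qp \<subseteq> Qp"
proof
  fix y assume "y \<in> mob a b c d ` Qp"
  then obtain x where x: "x \<in> Qp" "y = mob a b c d x" by blast
  have "x \<in> qp1" using x by (simp add: Qp_def)
  then have "y \<in> qp1" using x mob_qp1[OF det1] by simp
  moreover have "pr y = (a * fst x + b * snd x) * (c * fst x + d * snd x)"
    using x by (simp only: mob_ap pr_norm) (simp add: pr_def ap_def)
  moreover have "a * fst x + b * snd x \<ge> 0" "c * fst x + d * snd x \<ge> 0"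
    using Qp_nonneg[OF x(1)] pos by auto
  ultimately show "y \<in> Qp" by (simp add: Qp_def)
qed

lemma gi_pr: "pr (mob d (-b) (-c) a x) = (d * fst x - b * snd x) * (a * snd x - c * fst x)"
  by (simp only: mob_ap pr_norm) (simp add: pr_def ap_def algebra_simps)

lemma gi_Qm_strict: "x \<in> Qm \<Longrightarrow> pr (mob d (-b) (-c) a x) < 0"
proof -
  assume x: "x \<in> Qm"
  from Qm_cases[OF x] show ?thesis
  proof
    assume h: "fst x \<le> 0 \<and> snd x > 0"
    have "d * fst x \<le> fst x" using mul_le[of d "fst x"] pos h by simp
    moreover have "snd x \<le> b * snd x" using mul_ge[of b "snd x"] pos h by simp
    moreover have "snd x \<le> a * snd x" using mul_ge[of a "snd x"] pos h by simp
    moreover have "c * fst x \<le> fst x" using mul_le[of c "fst x"] pos h by simp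
    ultimately have "d * fst x - b * snd x < 0" "a * snd x - c * fst x > 0" using h by linarith+
    then show ?thesis by (simp add: gi_pr mult_less_0_iff)
  next
    assume "x = (1,0)"
    then show ?thesis using pos by (simp add: gi_pr mult_less_0_iff)
  qed
qed

lemma gi_Qm: "mob d (-b) (-c) a ` Qm \<subseteq> Qm"
  using gi_Qm_strict mob_qp1[OF det2] by (force simp: Qm_def)

lemma disj: "Qp \<inter> mob d (-b) (-c) a ` Qm = {}"
  using gi_Qm_strict by (force simp: Qp_def)

lemma reach_Qp: "x \<in> qp1 \<Longrightarrow> \<exists>p. (mob a b c d ^^ p) x \<in> Qp"
proof (rule reach_gen)
  show "\<And>x. x \<in> qp1 \<Longrightarrow> mob a b c d x \<in> qp1" using mob_qp1[OF det1] by blast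
next
  fix x assume x: "x \<in> qp1" "x \<notin> Qp" "mob a b c d x \<notin> Qp"
  let ?u = "a * fst x + b * snd x" and ?v = "c * fst x + d * snd x"
  have "mob a b c d x \<in> qp1" using mob_qp1[OF det1 x(1)] .
  then have "pr (mob a b c d x) < 0" using x(3) by (simp add: Qp_def)
  then have uv: "?u * ?v < 0" by (simp only: mob_ap pr_norm) (simp add: pr_def ap_def)
  have l: "l1 (mob a b c d x) = \<bar>?u\<bar> + \<bar>?v\<bar>" by (simp only: mob_ap l1_norm) (simp add: l1_def ap_def)
  have e1: "fst x = d * ?u - b * ?v" using det by (simp add: algebra_simps) (metis mult.commute distrib_left mult_1 right_diff_distrib' mult.left_commute)
  have e2: "snd x = a * ?v - c * ?u" using det by (simp add: algebra_simps) (metis mult.commute distrib_left mult_1 right_diff_distrib' mult.left_commute)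
  have "\<bar>?u\<bar> + \<bar>?v\<bar> \<le> \<bar>fst x\<bar>" using abs_opp[OF pos(4) pos(2) uv] e1 by simp
  moreover have "\<bar>?u\<bar> + \<bar>?v\<bar> \<le> \<bar>snd x\<bar>" using abs_opp[OF pos(1) pos(3), of ?v ?u] uv e2 by (simp add: mult.commute)
  moreover have "\<bar>?u\<bar> + \<bar>?v\<bar> > 0" using uv by (cases "?u = 0") auto
  ultimately show "l1 (mob a b c d x) < l1 x" using l by (simp add: l1_def)
qed

lemma reach_Qm: "x \<in> qp1 \<Longrightarrow> \<exists>p. (mob d (-b) (-c) a ^^ p) x \<in> Qm"
proof (rule reach_gen)
  show "\<And>x. x \<in> qp1 \<Longrightarrow> mob d (-b) (-c) a x \<in> qp1" using mob_qp1[OF det2] by blast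
next
  fix x assume x: "x \<in> qp1" "x \<notin> Qm" "mob d (-b) (-c) a x \<notin> Qm"
  let ?u = "d * fst x - b * snd x" and ?v = "a * snd x - c * fst x"
  have "mob d (-b) (-c) a x \<in> qp1" using mob_qp1[OF det2 x(1)] .
  then have "pr (mob d (-b) (-c) a x) > 0" using x(3) by (simp add: Qm_def)
  then have uv: "?u * ?v > 0" by (simp add: gi_pr)
  have l: "l1 (mob d (-b) (-c) a x) = \<bar>?u\<bar> + \<bar>?v\<bar>" by (simp only: mob_ap l1_norm) (simp add: l1_def ap_def)
  have e1: "fst x = a * ?u + b * ?v" using det by (simp add: algebra_simps) (metis mult.commute distrib_left mult_1 right_diff_distrib' mult.left_commute)
  have e2: "snd x = c * ?u + d * ?v" using det by (simp add: algebra_simps) (metis mult.commute distrib_left mult_1 right_diff_distrib' mult.left_commute)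
  have "\<bar>?u\<bar> + \<bar>?v\<bar> \<le> \<bar>fst x\<bar>" using abs_same[OF pos(1) pos(2) uv] e1 by simp
  moreover have "\<bar>?u\<bar> + \<bar>?v\<bar> \<le> \<bar>snd x\<bar>" using abs_same[OF pos(3) pos(4) uv] e2 by simp
  moreover have "\<bar>?u\<bar> + \<bar>?v\<bar> > 0" using uv by (cases "?u = 0") auto
  ultimately show "l1 (mob d (-b) (-c) a x) < l1 x" using l by (simp add: l1_def)
qed

end


definition sm :: "int \<times> int \<Rightarrow> int" where "sm x = fst x + snd x"
definition root :: "(int \<times> int) set" where "root = {(1,0),(0,1)}"
definition e1 :: "(int \<times> int) set" where "e1 = {(1,0),(1,1)}"
definition e2 :: "(int \<times> int) set" where "e2 = {(0,1),(1,1)}"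
definition Sp :: "(int \<times> int) set set" where
  "Sp = {e. \<exists>x y. e = {x,y} \<and> farey_adj x y \<and> x \<in> Qp \<and> y \<in> Qp \<and> e \<noteq> root}"
definition RR :: "((int \<times> int) set \<times> (int \<times> int) set) set" where
  "RR = {(e', f'). e' \<in> Sp \<and> f' \<in> Sp \<and> T_adjacent e' f'}"

lemma n1: "(n::int) \<ge> 0 \<Longrightarrow> \<bar>n * k\<bar> = 1 \<Longrightarrow> n = 1 \<and> \<bar>k\<bar> = 1"
proof -
  assume h: "n \<ge> 0" "\<bar>n * k\<bar> = 1"
  then have "n * \<bar>k\<bar> = 1" by (simp add: abs_mult)
  moreover then have "n > 0" by (cases "n = 0") (use h in auto)
  ultimately show ?thesis by (simp add: pos_zmult_eq_1_iff)
qed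

lemma nn_qp1:
  assumes "fst z \<ge> 0" "snd z \<ge> 0" "\<bar>dt x z\<bar> = 1" shows "z \<in> qp1"
proof -
  have c: "coprime (fst z) (snd z)" using coprime_from_dt[OF assms(3)] .
  have "snd z = 0 \<Longrightarrow> fst z = 1"
  proof -
    assume "snd z = 0"
    then have "is_unit (fst z)" using c by simp
    then show "fst z = 1" using assms(1) by simp
  qed
  then show ?thesis using c assms(2) by (cases z) (auto simp: qp1_def)
qed

lemma Qp_iff_nn: "z \<in> qp1 \<Longrightarrow> fst z \<ge> 0 \<Longrightarrow> snd z \<ge> 0 \<Longrightarrow> z \<in> Qp"
  by (simp add: Qp_def pr_def)

lemma ord_le:
  fixes p q p' q' :: int
  assumes "0\<le>p" "0\<le>q" "0\<le>p'" "0\<le>q'" "\<bar>p*q' - q*p'\<bar> = 1" "p+q < p'+q'"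
  shows "p \<le> p'"
proof (rule ccontr)
  assume "\<not> p \<le> p'"
  then have h: "p' + 1 \<le> p" "q + 1 \<le> q'" using assms by auto
  have "(p'+1)*(q+1) \<le> p*q'" using mult_mono[OF h] assms by auto
  then have ge: "p*q' - q*p' \<ge> p' + q + 1" by (simp add: algebra_simps)
  then have "p*q' - q*p' > 0" using assms by linarith
  then have "p*q' - q*p' = 1" using assms(5) by simp
  then have "p' = 0" "q = 0" using ge assms by auto
  then have "p*q' = 1" using \<open>p*q' - q*p' = 1\<close> by simp
  then have "p = 1" "q' = 1" using assms by (auto simp: pos_zmult_eq_1_iff zmult_eq_1_iff)
  then show False using \<open>p' = 0\<close> \<open>q = 0\<close> assms(6) by simp
qed

lemma ord_le2:
  fixes p q p' q' :: int
  assumes "0\<le>p" "0\<le>q" "0\<le>p'" "0\<le>q'" "\<bar>p*q' - q*p'\<bar> = 1" "p+q < p'+q'"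
  shows "p \<le> p' \<and> q \<le> q'"
proof -
  have "\<bar>q*p' - p*q'\<bar> = 1" using assms(5) by (simp add: abs_minus_commute)
  then have "q \<le> q'" using ord_le[of q p q' p'] assms by (simp add: add.commute)
  then show ?thesis using ord_le[OF assms] by simp
qed

lemma sm_neq:
  assumes "x \<in> Qp" "y \<in> Qp" "farey_adj x y" "{x,y} \<noteq> root" shows "sm x \<noteq> sm y"
proof
  assume eq: "sm x = sm y"
  obtain p q p' q' where xy: "x = (p,q)" "y = (p',q')" by (cases x, cases y) auto
  have nn: "p \<ge> 0" "q \<ge> 0" "p' \<ge> 0" "q' \<ge> 0" using Qp_nonneg assms xy by force+
  have A0: "\<bar>p*q' - q*p'\<bar> = 1" using assms(3) xy by (simp add: farey_adj_def)
 have q': "q' = (p+q) - p'" using eq xy by (auto simp: sm_def)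
  have C0: "p*((p+q)-p') - q*p' = (p+q)*(p-p')" by (simp add: algebra_simps)
  have "\<bar>(p+q) * (p - p')\<bar> = 1" using A0 unfolding q' C0 .
  moreover have "p + q \<ge> 0" using nn by simp
  ultimately have "p + q = 1 \<and> \<bar>p - p'\<bar> = 1" using n1 by blast
  then have "(p = 1 \<and> q = 0 \<and> p' = 0 \<and> q' = 1) \<or> (p = 0 \<and> q = 1 \<and> p' = 1 \<and> q' = 0)"
    using nn q' by (auto simp: abs_if split: if_splits)
  then have "{x,y} = root" using xy by (auto simp: root_def)
  then show False using assms(4) by simp
qed

lemma tri_pair: "farey_triangle t \<Longrightarrow> u \<in> t \<Longrightarrow> v \<in> t \<Longrightarrow> u \<noteq> v \<Longrightarrow> farey_adj u v"
  unfolding farey_triangle_def using adj_sym by blast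

lemma sign_prod:
  fixes A B p q p' q' :: int
  assumes "\<bar>A\<bar> = 1" "\<bar>B\<bar> = 1" "0\<le>p" "0\<le>q" "p \<le> p'" "q \<le> q'"
  shows "0 \<le> (A*p + B*p') * (A*q + B*q')"
proof -
  have h1: "0 \<le> (p'-p)*(q'-q)" "0 \<le> (p+p')*(q+q')" using assms(3-6) by simp_all
  have A: "A = 1 \<or> A = -1" and B: "B = 1 \<or> B = -1" using assms(1,2) by auto
  then show ?thesis
  proof (elim disjE)
    assume "A = 1" "B = 1" then show ?thesis using h1 by simp
  next
    assume "A = -1" "B = -1"
    then have "(A*p + B*p') * (A*q + B*q') = (p+p')*(q+q')" by (simp add: algebra_simps)
    then show ?thesis using h1 by simp
  next
    assume "A = 1" "B = -1"
    then have "(A*p + B*p') * (A*q + B*q') = (p'-p)*(q'-q)" by (simp add: algebra_simps)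
    then show ?thesis using h1 by simp
  next
    assume "A = -1" "B = 1"
    then have "(A*p + B*p') * (A*q + B*q') = (p'-p)*(q'-q)" by (simp add: algebra_simps)
    then show ?thesis using h1 by simp
  qed
qed


lemma qp_pos_sm: "x \<in> Qp \<Longrightarrow> sm x > 0"
proof -
  assume x: "x \<in> Qp"
  then have "x \<in> qp1" by (simp add: Qp_def)
  then have "x \<noteq> (0,0)" by (rule qp1_nz)
  moreover have "fst x \<ge> 0" "snd x \<ge> 0" using Qp_nonneg[OF x] by auto
  ultimately show ?thesis by (cases x) (auto simp: sm_def)
qed

lemma e1_Sp: "e1 \<in> Sp"
  unfolding Sp_def e1_def
  by (rule CollectI, rule exI[of _ "(1,0)"], rule exI[of _ "(1,1)"])
     (auto simp: farey_adj_def qp1_def Qp_def pr_def root_def doubleton_eq_iff)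

lemma e2_Sp: "e2 \<in> Sp"
  unfolding Sp_def e2_def
  by (rule CollectI, rule exI[of _ "(0,1)"], rule exI[of _ "(1,1)"])
     (auto simp: farey_adj_def qp1_def Qp_def pr_def root_def doubleton_eq_iff)

lemma tri0: "farey_triangle {(1,0),(0,1),(1,1)}"
  unfolding farey_triangle_def
  by (rule exI[of _ "(1,0)"], rule exI[of _ "(0,1)"], rule exI[of _ "(1,1)"])
     (auto simp: farey_adj_def qp1_def)

lemma e21: "(e2, e1) \<in> RR"
  unfolding RR_def T_adjacent_def using e1_Sp e2_Sp tri0
  by (auto simp: e1_def e2_def intro!: exI[of _ "{(1,0),(0,1),(1,1)}"])

lemma sub_pt:
  assumes x: "x \<in> Qp" and y: "y \<in> Qp" and adj: "farey_adj x y" and lt: "sm x < sm y"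
  defines "z \<equiv> (fst y - fst x, snd y - snd x)"
  shows "z \<in> Qp" "farey_adj x z" "farey_adj z y" "farey_triangle {x,z,y}" "sm z = sm y - sm x"
proof -
  have nx: "fst x \<ge> 0" "snd x \<ge> 0" using Qp_nonneg[OF x] by auto
  have ny: "fst y \<ge> 0" "snd y \<ge> 0" using Qp_nonneg[OF y] by auto
  have d: "\<bar>dt x y\<bar> = 1" using adj by (simp add: farey_adj_dt)
  have "fst x \<le> fst y \<and> snd x \<le> snd y"
    using ord_le2[of "fst x" "snd x" "fst y" "snd y"] nx ny d lt by (simp add: dt_def sm_def)
  then have nz: "fst z \<ge> 0" "snd z \<ge> 0" by (auto simp: z_def)
  have dxz: "dt x z = dt x y" by (simp add: z_def dt_def algebra_simps)
  have dzy: "dt z y = - dt x y" by (simp add: z_def dt_def algebra_simps)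
  have zq: "z \<in> qp1" using nn_qp1[OF nz, of x] dxz d by simp
  show "z \<in> Qp" using Qp_iff_nn[OF zq nz] .
  have xq: "x \<in> qp1" "y \<in> qp1" using adj by (auto simp: farey_adj_def)
  show axz: "farey_adj x z" using xq zq dxz d by (simp add: farey_adj_dt)
  show azy: "farey_adj z y" using xq zq dzy d by (simp add: farey_adj_dt)
  show "farey_triangle {x,z,y}" unfolding farey_triangle_def using axz azy adj by blast
  show "sm z = sm y - sm x" by (simp add: z_def sm_def)
qed

lemma chain_aux:
  "\<forall>x y. nat (sm x + sm y) = n \<longrightarrow> farey_adj x y \<longrightarrow> x \<in> Qp \<longrightarrow> y \<in> Qp \<longrightarrow> {x,y} \<noteq> root
      \<longrightarrow> ({x,y}, e1) \<in> RR\<^sup>*"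
proof (induction n rule: less_induct)
  case (less n)
  have ord: "({x,y}, e1) \<in> RR\<^sup>*" if h: "nat (sm x + sm y) = n" "farey_adj x y" "x \<in> Qp" "y \<in> Qp"
     "{x,y} \<noteq> root" "sm x < sm y" for x y
  proof (cases "{x,y} = e1 \<or> {x,y} = e2")
    case True
    then show ?thesis using e21 by auto
  next
    case False
    define z where "z = (fst y - fst x, snd y - snd x)"
    have z: "z \<in> Qp" "farey_adj x z" "farey_adj z y" "farey_triangle {x,z,y}" "sm z = sm y - sm x"
      using sub_pt[OF h(3,4,2,6)] unfolding z_def by auto
    have nr: "{x,z} \<noteq> root"
    proof
      assume "{x,z} = root"
      then have "(x = (1,0) \<and> z = (0,1)) \<or> (x = (0,1) \<and> z = (1,0))"
        unfolding root_def by (auto simp: doubleton_eq_iff)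
      then have "y = (1,1) \<and> (x = (1,0) \<or> x = (0,1))" using z_def
        by (cases y) auto
      then show False using False by (auto simp: e1_def e2_def)
    qed
    have "sm x > 0" using qp_pos_sm[OF h(3)] .
    moreover have "sm z > 0" using qp_pos_sm[OF z(1)] .
    ultimately have "nat (sm x + sm z) < n" using h(1) z(5) by simp
    then have IH: "({x,z}, e1) \<in> RR\<^sup>*" using less.IH z(1,2) h(3) nr by blast
    have s1: "{x,y} \<in> Sp" using h unfolding Sp_def by blast
    have s2: "{x,z} \<in> Sp" using z h nr unfolding Sp_def by blast
    have "T_adjacent {x,y} {x,z}" unfolding T_adjacent_def using z(4) by blast
    then have "({x,y},{x,z}) \<in> RR" using s1 s2 by (simp add: RR_def)
    then show ?thesis using IH by (meson converse_rtrancl_into_rtrancl)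
  qed
  show ?case
  proof (intro allI impI)
    fix x y assume h: "nat (sm x + sm y) = n" "farey_adj x y" "x \<in> Qp" "y \<in> Qp" "{x,y} \<noteq> root"
    have "sm x \<noteq> sm y" using sm_neq h(2-5) by blast
    then show "({x,y}, e1) \<in> RR\<^sup>*"
    proof (cases "sm x < sm y")
      case True then show ?thesis using ord h by blast
    next
      case False
      then have "sm y < sm x" using \<open>sm x \<noteq> sm y\<close> by simp
      moreover have "{y,x} = {x,y}" by blast
      ultimately show ?thesis using ord[of y x] h adj_sym by (simp add: add.commute)
    qed
  qed
qed

lemma chain: "e \<in> Sp \<Longrightarrow> (e, e1) \<in> RR\<^sup>*"
  unfolding Sp_def using chain_aux by blast

lemma RR_sym: "RR\<inverse> = RR"
proof -
  have "\<And>e f. T_adjacent e f \<Longrightarrow> T_adjacent f e" unfolding T_adjacent_def by blast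
  then show ?thesis unfolding RR_def by auto
qed

lemma Sp_conn: "T_connected Sp"
  unfolding T_connected_def
proof (intro conjI ballI)
  fix e assume "e \<in> Sp" then show "farey_edge e" unfolding Sp_def farey_edge_def by blast
next
  fix e f assume "e \<in> Sp" "f \<in> Sp"
  have "(e, e1) \<in> RR\<^sup>*" using chain \<open>e \<in> Sp\<close> .
  moreover have "(f, e1) \<in> RR\<^sup>*" using chain \<open>f \<in> Sp\<close> .
  then have "(e1, f) \<in> (RR\<inverse>)\<^sup>*" by (simp add: rtrancl_converseI)
  then have "(e1, f) \<in> RR\<^sup>*" using RR_sym by simp
  ultimately have "(e, f) \<in> RR\<^sup>*" by simp
  then show "(e, f) \<in> {(e', f'). e' \<in> Sp \<and> f' \<in> Sp \<and> T_adjacent e' f'}\<^sup>*" by (simp add: RR_def)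
qed


lemma quad_sub:
  assumes e: "e \<in> Sp" shows "quadribone e \<subseteq> Qp"
proof
  fix w assume "w \<in> quadribone e"
  then obtain t where t: "farey_triangle t" "e \<subseteq> t" "w \<in> t" unfolding quadribone_def by blast
  obtain x y where xy: "e = {x,y}" "farey_adj x y" "x \<in> Qp" "y \<in> Qp" "e \<noteq> root"
    using e unfolding Sp_def by blast
  have key: "w \<in> Qp" if h: "farey_adj x y" "x \<in> Qp" "y \<in> Qp" "sm x < sm y" "x \<in> t" "y \<in> t" for x y
  proof (cases "w = x \<or> w = y")
    case True then show ?thesis using h by auto
  next
    case False
    have awx: "farey_adj w x" "farey_adj w y" using tri_pair[OF t(1)] t(3) h False by auto
    have wq: "w \<in> qp1" using awx by (simp add: farey_adj_def)
    obtain p q p' q' where xy': "x = (p,q)" "y = (p',q')" by (cases x, cases y) auto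
    have nx: "p \<ge> 0" "q \<ge> 0" "p' \<ge> 0" "q' \<ge> 0" using Qp_nonneg h(2,3) xy' by force+
    have D: "\<bar>dt x y\<bar> = 1" "\<bar>dt w y\<bar> = 1" "\<bar>dt x w\<bar> = 1"
      using h(1) awx adj_sym by (auto simp: farey_adj_dt)
    have le: "p \<le> p' \<and> q \<le> q'" using ord_le2[of p q p' q'] nx D(1) h(4) xy'
      by (simp add: dt_def sm_def)
    have i1: "dt x y * fst w = dt w y * p + dt x w * p'" using xy' by (simp add: dt_def algebra_simps)
    have i2: "dt x y * snd w = dt w y * q + dt x w * q'" using xy' by (simp add: dt_def algebra_simps)
    have "0 \<le> (dt w y * p + dt x w * p') * (dt w y * q + dt x w * q')"
      using sign_prod[OF D(2,3)] nx le by simp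
    also have "\<dots> = (dt x y * fst w) * (dt x y * snd w)" using i1 i2 by simp
    also have "\<dots> = (\<bar>dt x y\<bar> * \<bar>dt x y\<bar>) * (fst w * snd w)" by (simp add: abs_mult_self_eq algebra_simps)
    also have "\<dots> = fst w * snd w" using D(1) by simp
    finally show ?thesis using wq by (simp add: Qp_def pr_def)
  qed
  have "x \<in> t" "y \<in> t" using t(2) xy(1) by auto
  moreover have "sm x \<noteq> sm y" using sm_neq xy by blast
  ultimately show "w \<in> Qp"
  proof (cases "sm x < sm y")
    case True then show ?thesis using key xy \<open>x \<in> t\<close> \<open>y \<in> t\<close> by blast
  next
    case False
    then have "sm y < sm x" using \<open>sm x \<noteq> sm y\<close> by simp
    then show ?thesis using key[of y x] xy \<open>x \<in> t\<close> \<open>y \<in> t\<close> adj_sym by blast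
  qed
qed

lemma edge_tri: "farey_adj x y \<Longrightarrow> x \<in> Qp \<Longrightarrow> y \<in> Qp \<Longrightarrow> \<exists>t. farey_triangle t \<and> {x,y} \<subseteq> t"
proof -
  assume h: "farey_adj x y" "x \<in> Qp" "y \<in> Qp"
  define z where "z = (fst x + fst y, snd x + snd y)"
  have d: "\<bar>dt x y\<bar> = 1" using h by (simp add: farey_adj_dt)
  have "dt x z = dt x y" "dt y z = - dt x y" by (simp_all add: z_def dt_def algebra_simps)
  moreover have "fst z \<ge> 0" "snd z \<ge> 0" using Qp_nonneg h(2,3) by (auto simp: z_def)
  ultimately have zq: "z \<in> qp1" using nn_qp1[of z x] d by simp
  have "farey_adj x z" "farey_adj y z" using h zq d \<open>dt x z = dt x y\<close> \<open>dt y z = - dt x y\<close>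
    by (auto simp: farey_adj_dt)
  then have "farey_triangle {x,y,z}" unfolding farey_triangle_def using h(1) adj_sym by blast
  then show ?thesis by blast
qed

lemma pt_edge: "w \<in> Qp \<Longrightarrow> \<exists>e\<in>Sp. w \<in> e"
proof -
  assume w: "w \<in> Qp"
  obtain p q where pq: "w = (p,q)" by (cases w)
  have nn: "p \<ge> 0" "q \<ge> 0" using Qp_nonneg w pq by auto
  have wq: "w \<in> qp1" using w by (simp add: Qp_def)
  have cop: "coprime p q" using wq pq by (simp add: qp1_def)
  show ?thesis
  proof (cases "q = 0")
    case True then have "w = (1,0)" using wq pq by (simp add: qp1_def)
    then show ?thesis using e1_Sp by (auto simp: e1_def)
  next
    case qn: False
    show ?thesis
    proof (cases "p = 0")
      case True then have "w = (0,1)" using cop pq nn by simp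
      then show ?thesis using e2_Sp by (auto simp: e2_def)
    next
      case pn: False
      have pp: "p \<ge> 1" "q \<ge> 1" using pn qn nn by auto
      obtain u v where uv: "u * p + v * q = gcd p q" using bezout_int by blast
      then have uv1: "u * p + v * q = 1" using cop by simp
      define k where "k = \<bar>u\<bar> + \<bar>v\<bar> + 1"
      define y where "y = (k * p - v, k * q + u)"
      have "k \<le> k * p" "k \<le> k * q" using pp mul_ge[of p k] mul_ge[of q k] by (auto simp: k_def mult.commute)
      moreover have "v \<le> \<bar>v\<bar>" "-u \<le> \<bar>u\<bar>" "0 \<le> \<bar>u\<bar>" "0 \<le> \<bar>v\<bar>" by auto
      ultimately have "1 \<le> k * p - v" "1 \<le> k * q + u" using k_def by linarith+
      then have ny: "fst y \<ge> 1" "snd y \<ge> 1" by (auto simp: y_def)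
      have dwy: "dt w y = 1" using uv1 pq by (simp add: y_def dt_def algebra_simps)
      have yq: "y \<in> qp1" using nn_qp1[of y w] ny dwy by simp
      have yQ: "y \<in> Qp" using Qp_iff_nn[OF yq] ny by simp
      have adj: "farey_adj w y" using wq yq dwy by (simp add: farey_adj_dt)
      have "{w,y} \<noteq> root" using pp pq by (auto simp: root_def doubleton_eq_iff)
      then have "{w,y} \<in> Sp" using adj w yQ unfolding Sp_def by blast
      then show ?thesis by blast
    qed
  qed
qed

lemma Qp_union: "\<Union>(quadribone ` Sp) = Qp"
proof
  show "\<Union>(quadribone ` Sp) \<subseteq> Qp" using quad_sub by blast
next
  show "Qp \<subseteq> \<Union>(quadribone ` Sp)"
  proof
    fix w assume "w \<in> Qp"
    then obtain e where e: "e \<in> Sp" "w \<in> e" using pt_edge by blast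
    then obtain x y where xy: "e = {x,y}" "farey_adj x y" "x \<in> Qp" "y \<in> Qp" unfolding Sp_def by blast
    then obtain t where "farey_triangle t" "{x,y} \<subseteq> t" using edge_tri by blast
    then have "w \<in> quadribone e" using e xy unfolding quadribone_def by blast
    then show "w \<in> \<Union>(quadribone ` Sp)" using e by blast
  qed
qed

lemma Qp_conn: "connected_B Qp"
  unfolding connected_B_def using Sp_conn Qp_union[symmetric] by blast


fun mm :: "int \<times> int \<times> int \<times> int \<Rightarrow> int \<times> int \<times> int \<times> int \<Rightarrow> int \<times> int \<times> int \<times> int" where
  "mm (a,b,c,d) (e,f,g,h) = (a*e+b*g, a*f+b*h, c*e+d*g, c*f+d*h)"

fun det4 :: "int \<times> int \<times> int \<times> int \<Rightarrow> int" where
  "det4 (a,b,c,d) = a*d - b*c"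

fun posm :: "int \<times> int \<times> int \<times> int \<Rightarrow> bool" where
  "posm (a,b,c,d) = (1 \<le> a \<and> 1 \<le> b \<and> 1 \<le> c \<and> 1 \<le> d)"

definition cnj :: "int \<times> int \<times> int \<times> int \<Rightarrow> int \<times> int \<times> int \<times> int \<Rightarrow> bool" where
  "cnj M M' = (\<exists>H. \<bar>det4 H\<bar> = 1 \<and> mm M H = mm H M')"

lemma mm_assoc: "mm (mm A B) C = mm A (mm B C)"
  by (cases A, cases B, cases C) (simp add: algebra_simps)

lemma det_mm: "det4 (mm A B) = det4 A * det4 B"
  by (cases A, cases B) (simp add: algebra_simps)

lemma cnj_trans: "cnj M M1 \<Longrightarrow> cnj M1 M2 \<Longrightarrow> cnj M M2"
proof -
  assume "cnj M M1" "cnj M1 M2"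
  then obtain H1 H2 where h: "\<bar>det4 H1\<bar> = 1" "mm M H1 = mm H1 M1" "\<bar>det4 H2\<bar> = 1" "mm M1 H2 = mm H2 M2"
    unfolding cnj_def by blast
  have "mm M (mm H1 H2) = mm (mm M H1) H2" by (simp only: mm_assoc)
  also have "\<dots> = mm (mm H1 M1) H2" by (simp only: h(2))
  also have "\<dots> = mm H1 (mm M1 H2)" by (simp only: mm_assoc)
  also have "\<dots> = mm H1 (mm H2 M2)" by (simp only: h(4))
  also have "\<dots> = mm (mm H1 H2) M2" by (simp only: mm_assoc)
  finally have "mm M (mm H1 H2) = mm (mm H1 H2) M2" .
  moreover have "\<bar>det4 (mm H1 H2)\<bar> = 1" using h by (simp add: det_mm abs_mult)
  ultimately show ?thesis unfolding cnj_def by blast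
qed

lemma cnj_T: "cnj (a,b,c,d) (a - k*c, k*(a-k*c) + b - k*d, c, k*c + d)"
  unfolding cnj_def by (rule exI[of _ "(1,k,0,1)"]) (simp add: algebra_simps)

lemma cnj_J: "cnj (a,b,c,d) (a, -b, -c, d)"
  unfolding cnj_def by (rule exI[of _ "(-1,0,0,1)"]) simp

lemma cnj_S: "cnj (a,b,c,d) (d, -c, -b, a)"
  unfolding cnj_def by (rule exI[of _ "(0,-1,1,0)"]) simp

lemma c_nz: "a*d - b*c = 1 \<Longrightarrow> a + d \<ge> 3 \<Longrightarrow> c \<noteq> (0::int)"
proof
  assume "a*d - b*c = 1" "a + d \<ge> 3" "c = 0"
  then have "a * d = 1" by simp
  then have "(a = 1 \<and> d = 1) \<or> (a = -1 \<and> d = -1)" by (simp add: zmult_eq_1_iff)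
  then show False using \<open>a + d \<ge> 3\<close> by auto
qed

lemma reduce:
  "\<forall>a b c d. nat \<bar>c\<bar> = n \<longrightarrow> a*d - b*c = 1 \<longrightarrow> a + d \<ge> 3 \<longrightarrow>
     (\<exists>M'. posm M' \<and> det4 M' = 1 \<and> cnj (a,b,c,d) M')"
proof (induction n rule: less_induct)
  case (less n)
  have pc: "\<exists>M'. posm M' \<and> det4 M' = 1 \<and> cnj (a,b,c,d) M'"
    if h: "nat \<bar>c\<bar> = n" "a*d - b*c = 1" "a + d \<ge> 3" "c > 0" for a b c d
  proof -
    define t where "t = a + d"
    define k where "k = (a - 1) div c"
    define a1 where "a1 = a - k*c"
    define b1 where "b1 = k*(a-k*c) + b - k*d"
    define d1 where "d1 = k*c + d"
    have cj: "cnj (a,b,c,d) (a1,b1,c,d1)" unfolding a1_def b1_def d1_def by (rule cnj_T)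
    have dt1: "a1*d1 - b1*c = 1" using h(2) unfolding a1_def b1_def d1_def by (simp add: algebra_simps)
    have "k * c + (a-1) mod c = a - 1" using div_mult_mod_eq[of "a-1" c] by (simp add: k_def)
    then have "a1 = 1 + (a - 1) mod c" unfolding a1_def by linarith
    moreover have "0 \<le> (a - 1) mod c" "(a - 1) mod c < c" using h(4) by simp_all
    ultimately have a1r: "1 \<le> a1" "a1 \<le> c" by linarith+
    have tr: "a1 + d1 = t" unfolding a1_def d1_def t_def by simp
    show ?thesis
    proof (cases "c \<le> t - 1")
      case True
      then have d1p: "d1 \<ge> 1" using tr a1r by linarith
      have "(a1 - 1) * (d1 - 1) \<ge> 0" using a1r d1p by simp
      then have "a1 * d1 \<ge> a1 + d1 - 1" by (simp add: algebra_simps)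
      then have "b1 * c \<ge> 1" using dt1 tr h(3) t_def by linarith
      have "b1 \<ge> 1"
      proof (rule ccontr)
        assume "\<not> b1 \<ge> 1"
        then have "b1 * c \<le> 0" using h(4) by (simp add: mult_nonpos_nonneg)
        then show False using \<open>b1 * c \<ge> 1\<close> by simp
      qed
      then have "posm (a1,b1,c,d1)" using a1r d1p h(4) by simp
      then show ?thesis using cj dt1 by auto
    next
      case False
      then have ct: "c \<ge> t" by simp
      have "t \<ge> 3" using h(3) t_def by simp
      then have d1b: "\<bar>d1\<bar> \<le> c - 1" using tr a1r ct by auto
      have "a1 * \<bar>d1\<bar> \<le> c * (c - 1)" using mult_mono[OF a1r(2) d1b] a1r by simp
      moreover have "\<bar>a1 * d1\<bar> = a1 * \<bar>d1\<bar>" using a1r by (simp add: abs_mult)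
      moreover have "\<bar>a1 * d1 - 1\<bar> \<le> \<bar>a1 * d1\<bar> + 1" by arith
      ultimately have "\<bar>a1 * d1 - 1\<bar> \<le> c * (c - 1) + 1" by linarith
      moreover have "b1 * c = a1 * d1 - 1" using dt1 by simp
      moreover have "\<bar>b1 * c\<bar> = \<bar>b1\<bar> * c" using h(4) by (simp add: abs_mult)
      ultimately have bc: "\<bar>b1\<bar> * c \<le> c * (c - 1) + 1" by simp
      have b1c: "\<bar>b1\<bar> < c"
      proof (rule ccontr)
        assume "\<not> \<bar>b1\<bar> < c"
        then have "c * c \<le> \<bar>b1\<bar> * c" using h(4) by (simp add: mult_right_mono)
        moreover have "c * (c - 1) = c * c - c" by (simp add: algebra_simps)
        ultimately show False using bc \<open>t \<ge> 3\<close> ct by linarith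
      qed
      have cj2: "cnj (a1,b1,c,d1) (d1, -c, -b1, a1)" by (rule cnj_S)
      have "nat \<bar>-b1\<bar> < n" using b1c h(1) by simp
      moreover have "d1 * a1 - (-c) * (-b1) = 1" using dt1 by (simp add: algebra_simps)
      moreover have "d1 + a1 \<ge> 3" using tr \<open>t \<ge> 3\<close> by simp
      ultimately obtain M' where "posm M'" "det4 M' = 1" "cnj (d1, -c, -b1, a1) M'"
        using less.IH by blast
      then show ?thesis using cnj_trans[OF cj cnj_trans[OF cj2]] by blast
    qed
  qed
  show ?case
  proof (intro allI impI)
    fix a b c d assume h: "nat \<bar>c\<bar> = n" "a*d - b*c = 1" "a + d \<ge> 3"
    have "c \<noteq> 0" using c_nz h(2,3) .
    show "\<exists>M'. posm M' \<and> det4 M' = 1 \<and> cnj (a,b,c,d) M'"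
    proof (cases "c > 0")
      case True then show ?thesis using pc h by blast
    next
      case False
      then have "-c > 0" using \<open>c \<noteq> 0\<close> by simp
      moreover have "a*d - (-b)*(-c) = 1" using h(2) by simp
      ultimately obtain M' where "posm M'" "det4 M' = 1" "cnj (a,-b,-c,d) M'"
        using pc[where a=a and b="-b" and c="-c" and d=d] h by auto
      then show ?thesis using cnj_trans[OF cnj_J] by blast
    qed
  qed
qed


lemma Qm_eq: "Qm = mob (-1) 0 0 1 ` Qp"
proof
  have a: "aut (mob (-1) 0 0 1) (mob 1 0 0 (-1))" using aut_mob[of "-1" 1 0 0] by simp
  show "Qm \<subseteq> mob (-1) 0 0 1 ` Qp"
  proof
    fix y assume y: "y \<in> Qm"
    then have yq: "y \<in> qp1" by (simp add: Qm_def)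
    have "mob 1 0 0 (-1) y \<in> qp1" using a yq unfolding aut_def by blast
    moreover have "pr (mob 1 0 0 (-1) y) = - pr y"
      by (simp only: mob_ap pr_norm) (simp add: pr_def ap_def)
    ultimately have "mob 1 0 0 (-1) y \<in> Qp" using y by (simp add: Qm_def Qp_def)
    moreover have "mob (-1) 0 0 1 (mob 1 0 0 (-1) y) = y" using a yq unfolding aut_def by blast
    ultimately show "y \<in> mob (-1) 0 0 1 ` Qp" by (metis imageI)
  qed
next
  show "mob (-1) 0 0 1 ` Qp \<subseteq> Qm"
  proof
    fix y assume "y \<in> mob (-1) 0 0 1 ` Qp"
    then obtain x where x: "x \<in> Qp" "y = mob (-1) 0 0 1 x" by blast
    have "y \<in> qp1" using x mob_qp1[of "-1" 1 0 0 x] by (simp add: Qp_def)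
    moreover have "pr y = - pr x" using x(2)
      by (simp only: mob_ap pr_norm) (simp add: pr_def ap_def)
    ultimately show "y \<in> Qm" using x by (simp add: Qm_def Qp_def)
  qed
qed

lemma Qm_conn: "connected_B Qm"
proof -
  have a: "aut (mob (-1) 0 0 1) (mob 1 0 0 (-1))" using aut_mob[of "-1" 1 0 0] by simp
  show ?thesis using aut_connected[OF a Qp_conn] Qm_eq by simp
qed

lemma core_good:
  assumes pos: "1 \<le> a" "1 \<le> b" "1 \<le> c" "1 \<le> d" and det: "a*d - b*c = 1"
  shows "good (mob a b c d) (mob d (-b) (-c) a) Qp (mob d (-b) (-c) a ` Qm)"
proof -
  have d1: "\<bar>a*d-b*c\<bar> = 1" using det by simp
  have ag: "aut (mob a b c d) (mob d (-b) (-c) a)" using aut_mob[OF d1] .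
  have ag': "aut (mob d (-b) (-c) a) (mob a b c d)" using aut_sym[OF ag] .
  have p01: "(0,1) \<in> Qp" "(0,1) \<in> Qm" by (simp_all add: Qp_def Qm_def qp1_def pr_def)
  have gQm: "mob d (-b) (-c) a ` Qm \<subseteq> Qm" using gi_Qm[OF pos det] .
  show ?thesis unfolding good_def
  proof (intro conjI)
    show "aut (mob a b c d) (mob d (-b) (-c) a)" by (rule ag)
    show "Qp \<subseteq> qp1" by (auto simp: Qp_def)
    show "Qp \<noteq> {}" using p01 by blast
    show "mob d (-b) (-c) a ` Qm \<subseteq> qp1" using ag unfolding aut_def Qm_def by blast
    show "mob d (-b) (-c) a ` Qm \<noteq> {}" using p01 by blast
    show "mob a b c d ` Qp \<subseteq> Qp" using g_Qp[OF pos det] .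
    show "mob d (-b) (-c) a ` mob d (-b) (-c) a ` Qm \<subseteq> mob d (-b) (-c) a ` Qm"
      using gQm by (rule image_mono)
    show "Qp \<inter> mob d (-b) (-c) a ` Qm = {}" using disj[OF pos det] .
    show "\<forall>x\<in>qp1. \<exists>p. (mob a b c d ^^ p) x \<in> Qp" using reach_Qp[OF pos det] by blast
    show "\<forall>x\<in>qp1. \<exists>p. (mob d (-b) (-c) a ^^ p) x \<in> mob d (-b) (-c) a ` Qm"
    proof
      fix x assume "x \<in> qp1"
      then obtain p where "(mob d (-b) (-c) a ^^ p) x \<in> Qm" using reach_Qm[OF pos det] by blast
      then have "(mob d (-b) (-c) a ^^ Suc p) x \<in> mob d (-b) (-c) a ` Qm" by simp
      then show "\<exists>p. (mob d (-b) (-c) a ^^ p) x \<in> mob d (-b) (-c) a ` Qm" by blast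
    qed
    show "connected_B Qp" by (rule Qp_conn)
    show "connected_B (mob d (-b) (-c) a ` Qm)" using aut_connected[OF ag' Qm_conn] .
  qed
qed

fun adj4 :: "int \<times> int \<times> int \<times> int \<Rightarrow> int \<times> int \<times> int \<times> int" where
  "adj4 (a,b,c,d) = (d,-b,-c,a)"

lemma adj_l: "det4 M = 1 \<Longrightarrow> mm (adj4 M) M = (1,0,0,1)"
  by (cases M) (simp add: algebra_simps)
lemma adj_r: "det4 M = 1 \<Longrightarrow> mm M (adj4 M) = (1,0,0,1)"
  by (cases M) (simp add: algebra_simps)
lemma id_l: "mm (1,0,0,1) M = M" by (cases M) simp
lemma id_r: "mm M (1,0,0,1) = M" by (cases M) simp

lemma adj_cnj:
  assumes "det4 M = 1" "det4 M' = 1" "mm M H = mm H M'"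
  shows "mm (adj4 M) H = mm H (adj4 M')"
proof -
  have "mm H (adj4 M') = mm (mm (adj4 M) M) (mm H (adj4 M'))" using adj_l[OF assms(1)] id_l by simp
  also have "\<dots> = mm (adj4 M) (mm (mm M H) (adj4 M'))" by (simp only: mm_assoc)
  also have "\<dots> = mm (adj4 M) (mm (mm H M') (adj4 M'))" by (simp only: assms(3))
  also have "\<dots> = mm (adj4 M) (mm H (mm M' (adj4 M')))" by (simp only: mm_assoc)
  also have "\<dots> = mm (adj4 M) H" using adj_r[OF assms(2)] id_r by simp
  finally show ?thesis by simp
qed

lemma mob_mm: "mm (a,b,c,d) (e,f,g,h) = (a',b',c',d') \<Longrightarrow> mob a b c d (mob e f g h y) = mob a' b' c' d' y"
  by (simp add: mob_comp)

lemma pos_case: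
  fixes a b c d :: int
  assumes det: "a * d - b * c = 1" and tr: "a + d \<ge> 3"
  shows "\<exists>Up Um :: nat \<Rightarrow> (int \<times> int) set.
           (\<forall>n. connected_B (Up n)) \<and> (\<forall>n. connected_B (Um n)) \<and>
           vanishing_seq (mob a b c d) Up \<and>
           vanishing_seq (mob d (-b) (-c) a) Um \<and>
           Up 0 \<inter> Um 0 = {}"
proof -
  obtain M' where M': "posm M'" "det4 M' = 1" "cnj (a,b,c,d) M'" using reduce det tr by blast
  obtain a' b' c' d' where m': "M' = (a',b',c',d')" by (cases M') auto
  obtain H where H: "\<bar>det4 H\<bar> = 1" "mm (a,b,c,d) H = mm H M'" using M'(3) unfolding cnj_def by blast
  obtain e f g h where h: "H = (e,f,g,h)" by (cases H) auto
  have pos: "1 \<le> a'" "1 \<le> b'" "1 \<le> c'" "1 \<le> d'" and d': "a'*d' - b'*c' = 1" using M' m' by auto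
  have gd: "good (mob a' b' c' d') (mob d' (-b') (-c') a') Qp (mob d' (-b') (-c') a' ` Qm)"
    using core_good[OF pos d'] .
  have ag: "aut (mob a b c d) (mob d (-b) (-c) a)" using aut_mob[of a d b c] det by simp
  have ah: "aut (mob e f g h) (mob h (-f) (-g) e)" using aut_mob[of e h f g] H(1) h by simp
  have c1: "\<And>y. mob a b c d (mob e f g h y) = mob e f g h (mob a' b' c' d' y)"
  proof -
    fix y
    obtain r where r: "mm (a,b,c,d) (e,f,g,h) = r" by blast
    obtain r1 r2 r3 r4 where "r = (r1,r2,r3,r4)" by (cases r) auto
    then show "mob a b c d (mob e f g h y) = mob e f g h (mob a' b' c' d' y)"
      using r H(2) h m' mob_mm[of a b c d e f g h r1 r2 r3 r4 y] mob_mm[of e f g h a' b' c' d' r1 r2 r3 r4 y]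
      by simp
  qed
  have H2: "mm (d,-b,-c,a) H = mm H (d',-b',-c',a')"
    using adj_cnj[of "(a,b,c,d)" M' H] det M'(2) H(2) m' by simp
  have c2: "\<And>y. mob d (-b) (-c) a (mob e f g h y) = mob e f g h (mob d' (-b') (-c') a' y)"
  proof -
    fix y
    obtain r where r: "mm (d,-b,-c,a) (e,f,g,h) = r" by blast
    obtain r1 r2 r3 r4 where "r = (r1,r2,r3,r4)" by (cases r) auto
    then show "mob d (-b) (-c) a (mob e f g h y) = mob e f g h (mob d' (-b') (-c') a' y)"
      using r H2 h mob_mm[of d "-b" "-c" a e f g h r1 r2 r3 r4 y] mob_mm[of e f g h d' "-b'" "-c'" a' r1 r2 r3 r4 y]
      by simp
  qed
  have "good (mob a b c d) (mob d (-b) (-c) a) (mob e f g h ` Qp) (mob e f g h ` mob d' (-b') (-c') a' ` Qm)"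
    using good_transport[OF gd ag ah] c1 c2 by blast
  then show ?thesis by (rule good_final)
qed

theorem mainTheorem7:
  fixes a b c d :: int
  assumes "a * d - b * c = 1"
    and "\<bar>a + d\<bar> > 2"
  shows "\<exists>Up Um :: nat \<Rightarrow> (int \<times> int) set.
           (\<forall>n. connected_B (Up n)) \<and> (\<forall>n. connected_B (Um n)) \<and>
           vanishing_seq (mob a b c d) Up \<and>
           vanishing_seq (mob d (-b) (-c) a) Um \<and>
           Up 0 \<inter> Um 0 = {}"
proof (cases "a + d \<ge> 3")
  case True then show ?thesis using pos_case assms(1) by blast
next
  case False
  then have t3: "(-a) + (-d) \<ge> 3" using assms(2) by linarith
  have dd: "(-a) * (-d) - (-b) * (-c) = 1" using assms(1) by simp
  have "\<exists>Up Um :: nat \<Rightarrow> (int \<times> int) set.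
           (\<forall>n. connected_B (Up n)) \<and> (\<forall>n. connected_B (Um n)) \<and>
           vanishing_seq (mob (-a) (-b) (-c) (-d)) Up \<and>
           vanishing_seq (mob (-d) (-(-b)) (-(-c)) (-a)) Um \<and>
           Up 0 \<inter> Um 0 = {}" by (rule pos_case[OF dd t3])
  moreover have "mob (-a) (-b) (-c) (-d) = mob a b c d" by (rule mob_neg)
  moreover have "mob (-d) (-(-b)) (-(-c)) (-a) = mob d (-b) (-c) a" by (rule mob_neg)
  ultimately show ?thesis by simp
qed


end
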